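(* Let $f:\mathbb{R}^n\to\mathbb{R}$ be convex and differentiable with $\nabla f$ $L$-Lipschitz continuous, and assume $X^*$ is non-empty. Then the sequences $\{x^k\},\{z^k\}$ generated by Algorithm 3 (with $\nabla f(x^k)\ne0$ for all $k$) satisfy, for every $x^*\in X^*$ and every $k$, $$\|x^{k+1}-x^*\|^2\le\|x^k-x^*\|^2-\kappa_4\|x^k-z^k\|^2,$$ where $\kappa_4=\eta(2-\eta)\alpha_{\min}\left((1-\beta)\left(1-\frac{L\overline{h}}{4}\right)+\beta(1-\nu)\right)>0$ and $\alpha_{\min}=\frac{(1-\beta)\left(1-\frac{L\overline{h}}{4}\right)+\beta(1-\nu)}{2+2\beta^2\nu^2}$.
   Context: $X^*=\{x:\nabla f(x)=0\}$ (the set of minimizers of the convex $f$). Algorithm 3: parameters $0<\mu<\nu<1$, $0<\underline{h}<1\le\gamma_0^0\le\overline{h}<\frac4L$, $0\le\beta\le1$, $\theta\in(0,1)$, $\tau>1$, $\eta\in(0,2)$, starting point $x^0$; run while $\nabla f(x^k)\neq0$. At iteration $k$: for $\gamma>0$ let $z^k(\gamma)=x^k-\gamma\nabla f(x^k)$ and $r_k(\gamma)=\gamma\|\nabla f(z^k(\gamma))-\nabla f(x^k)\|/\|z^k(\gamma)-x^k\|$; starting from $\gamma_0^k$, while $r_k(\gamma_l^k)>\nu$ set $\gamma_{l+1}^k=\gamma_l^k\theta\min\{1,1/r_k(\gamma_l^k)\}$; let $h_k$ be the first $\gamma_l^k$ with $r_k(\gamma_l^k)\le\nu$. Then $z^k=x^k-h_k\nabla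 f(x^k)$ and $x^{k+1}=x^k-\eta\alpha_kh_k\big(\nabla f(x^k)-\beta(\nabla f(x^k)-\nabla f(z^k))\big)$ with $$\alpha_k=\frac{(1-\beta)\left(1-\frac{Lh_k}{4}\right)\|x^k-z^k\|^2+\beta\langle x^k-z^k,h_k\nabla f(z^k)\rangle}{h_k^2\|\nabla f(x^k)-\beta(\nabla f(x^k)-\nabla f(z^k))\|^2};$$ finally $\gamma_0^{k+1}=\mathbf{P}_{[\underline{h},\overline{h}]}(\tau h_k)$ if $r_k(h_k)\le\mu$, else $\gamma_0^{k+1}=\mathbf{P}_{[\underline{h},\overline{h}]}(h_k)$, where $\mathbf{P}_{[a,b]}$ is projection onto $[a,b]$. *)

theory Defs
  imports "HOL-Analysis.Analysis"
begin

definition alg3_r :: "('a::real_normed_vector \<Rightarrow> 'a) \<Rightarrow> 'a \<Rightarrow> real \<Rightarrow> real" where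
  "alg3_r g x \<gamma> =
     \<gamma> * norm (g (x - \<gamma> *\<^sub>R g x) - g x) / norm ((x - \<gamma> *\<^sub>R g x) - x)"

text \<open>Backtracking trial step sizes gamma_l (the update is only used while r > nu).\<close>
primrec alg3_bt :: "('a::real_normed_vector \<Rightarrow> 'a) \<Rightarrow> real \<Rightarrow> 'a \<Rightarrow> real \<Rightarrow> nat \<Rightarrow> real" where
  "alg3_bt g \<theta> x \<gamma>0 0 = \<gamma>0"
| "alg3_bt g \<theta> x \<gamma>0 (Suc l) =
     alg3_bt g \<theta> x \<gamma>0 l * \<theta> * min 1 (1 / alg3_r g x (alg3_bt g \<theta> x \<gamma>0 l))"

definition alg3_h :: "('a::real_normed_vector \<Rightarrow> 'a) \<Rightarrow> real \<Rightarrow> real \<Rightarrow> 'a \<Rightarrow> real \<Rightarrow> real" where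
  "alg3_h g \<nu> \<theta> x \<gamma>0 =
     alg3_bt g \<theta> x \<gamma>0 (LEAST l. alg3_r g x (alg3_bt g \<theta> x \<gamma>0 l) \<le> \<nu>)"

definition alg3_alpha :: "real \<Rightarrow> real \<Rightarrow> ('a::real_inner \<Rightarrow> 'a) \<Rightarrow> 'a \<Rightarrow> real \<Rightarrow> 'a \<Rightarrow> real" where
  "alg3_alpha L \<beta> g x h z =
     ((1 - \<beta>) * (1 - L * h / 4) * (norm (x - z))\<^sup>2 + \<beta> * inner (x - z) (h *\<^sub>R g z))
     / (h\<^sup>2 * (norm (g x - \<beta> *\<^sub>R (g x - g z)))\<^sup>2)"

definition proj_interval :: "real \<Rightarrow> real \<Rightarrow> real \<Rightarrow> real" where
  "proj_interval a b t = max a (min b t)"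

primrec alg3_state ::
  "('a::real_inner \<Rightarrow> 'a) \<Rightarrow> real \<Rightarrow> real \<Rightarrow> real \<Rightarrow> real \<Rightarrow> real \<Rightarrow> real \<Rightarrow> real \<Rightarrow> real \<Rightarrow> real
   \<Rightarrow> 'a \<Rightarrow> real \<Rightarrow> nat \<Rightarrow> 'a \<times> real" where
  "alg3_state g L \<mu> \<nu> hl hu \<beta> \<theta> \<tau> \<eta> x0 \<gamma>00 0 = (x0, \<gamma>00)"
| "alg3_state g L \<mu> \<nu> hl hu \<beta> \<theta> \<tau> \<eta> x0 \<gamma>00 (Suc k) =
    (let (x, \<gamma>0) = alg3_state g L \<mu> \<nu> hl hu \<beta> \<theta> \<tau> \<eta> x0 \<gamma>00 k;
         h = alg3_h g \<nu> \<theta> x \<gamma>0;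
         z = x - h *\<^sub>R g x;
         d = g x - \<beta> *\<^sub>R (g x - g z);
         x' = x - (\<eta> * alg3_alpha L \<beta> g x h z * h) *\<^sub>R d;
         \<gamma>0' = (if alg3_r g x h \<le> \<mu> then proj_interval hl hu (\<tau> * h)
                 else proj_interval hl hu h)
     in (x', \<gamma>0'))"

definition alg3_x where
  "alg3_x g L \<mu> \<nu> hl hu \<beta> \<theta> \<tau> \<eta> x0 \<gamma>00 k = fst (alg3_state g L \<mu> \<nu> hl hu \<beta> \<theta> \<tau> \<eta> x0 \<gamma>00 k)"

definition alg3_z where
  "alg3_z g L \<mu> \<nu> hl hu \<beta> \<theta> \<tau> \<eta> x0 \<gamma>00 k =
    (let (x, \<gamma>0) = alg3_state g L \<mu> \<nu> hl hu \<beta> \<theta> \<tau> \<eta> x0 \<gamma>00 k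
     in x - alg3_h g \<nu> \<theta> x \<gamma>0 *\<^sub>R g x)"

end

theory Submission
  imports Defs
begin

lemma line_deriv:
  fixes f :: "'a::real_inner \<Rightarrow> real"
  assumes grad: "\<And>x. (f has_derivative (\<lambda>v. inner (g x) v)) (at x)"
  shows "((\<lambda>t. f (x + t *\<^sub>R v)) has_real_derivative inner (g (x + t *\<^sub>R v)) v) (at t within S)"
proof -
  have d1: "((\<lambda>t. x + t *\<^sub>R v) has_derivative (\<lambda>s. s *\<^sub>R v)) (at t within S)"
    by (auto intro!: derivative_eq_intros)
  have "((\<lambda>t. f (x + t *\<^sub>R v)) has_derivative (\<lambda>s. inner (g (x + t *\<^sub>R v)) (s *\<^sub>R v))) (at t within S)"
    using has_derivative_compose[OF d1 grad[of "x + t *\<^sub>R v"]] by (simp add: o_def)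
  then show ?thesis
    unfolding has_field_derivative_def by (simp add: mult.commute[of _ "inner _ _"])
qed

lemma grad_ineq:
  fixes f :: "'a::real_inner \<Rightarrow> real"
  assumes conv: "convex_on UNIV f"
    and grad: "\<And>x. (f has_derivative (\<lambda>v. inner (g x) v)) (at x)"
  shows "f y \<ge> f x + inner (g x) (y - x)"
proof -
  define \<phi> where "\<phi> t = f (x + t *\<^sub>R (y - x))" for t
  have c: "convex_on UNIV \<phi>"
  proof (rule convex_onI)
    fix t a b :: real assume "t > 0" "t < 1"
    have "x + ((1 - t) * a + t * b) *\<^sub>R (y - x) = (1 - t) *\<^sub>R (x + a *\<^sub>R (y - x)) + t *\<^sub>R (x + b *\<^sub>R (y - x))"
      by (simp add: algebra_simps)
    then show "\<phi> ((1 - t) *\<^sub>R a + t *\<^sub>R b) \<le> (1 - t) * \<phi> a + t * \<phi> b"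
      unfolding \<phi>_def using convex_onD[OF conv, of t] \<open>t>0\<close> \<open>t<1\<close> by simp
  qed simp
  have "\<phi> 1 - \<phi> 0 \<ge> inner (g x) (y - x) * (1 - 0)"
    apply (rule convex_on_imp_above_tangent[OF c])
    using line_deriv[OF grad, of x "y - x" 0 UNIV] unfolding \<phi>_def[abs_def] by auto
  then show ?thesis by (simp add: \<phi>_def)
qed

lemma descent:
  fixes f :: "'a::real_inner \<Rightarrow> real"
  assumes grad: "\<And>x. (f has_derivative (\<lambda>v. inner (g x) v)) (at x)"
    and Lip: "\<And>x y. norm (g x - g y) \<le> L * norm (x - y)"
  shows "f y \<le> f x + inner (g x) (y - x) + L / 2 * (norm (y - x))\<^sup>2"
proof -
  define v where "v = y - x"
  define \<phi> where "\<phi> t = f (x + t *\<^sub>R v) - t * inner (g x) v - L / 2 * t\<^sup>2 * (norm v)\<^sup>2" for t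
  have "\<phi> 0 \<ge> \<phi> 1"
  proof (rule DERIV_nonpos_imp_nonincreasing[of 0 1 \<phi>])
    fix t :: real assume t: "0 \<le> t" "t \<le> 1"
    have "(\<phi> has_real_derivative inner (g (x + t *\<^sub>R v)) v - inner (g x) v - L / 2 * (2 * t) * (norm v)\<^sup>2) (at t)"
      unfolding \<phi>_def
      using line_deriv[OF grad, of x v t UNIV]
      by (auto intro!: derivative_eq_intros)
    moreover have "inner (g (x + t *\<^sub>R v)) v - inner (g x) v \<le> L * t * (norm v)\<^sup>2"
    proof -
      have "inner (g (x + t *\<^sub>R v)) v - inner (g x) v = inner (g (x + t *\<^sub>R v) - g x) v"
        by (simp add: inner_diff_left)
      also have "\<dots> \<le> norm (g (x + t *\<^sub>R v) - g x) * norm v" by (rule norm_cauchy_schwarz)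
      also have "\<dots> \<le> (L * norm (t *\<^sub>R v)) * norm v"
        using Lip[of "x + t *\<^sub>R v" x] by (intro mult_right_mono) auto
      finally show ?thesis using t by (simp add: power2_eq_square)
    qed
    ultimately show "\<exists>y. (\<phi> has_real_derivative y) (at t) \<and> y \<le> 0" by force
  qed simp
  then show ?thesis by (simp add: \<phi>_def v_def)
qed


lemma lowb:
  fixes f :: "'a::real_inner \<Rightarrow> real"
  assumes conv: "convex_on UNIV f"
    and grad: "\<And>x. (f has_derivative (\<lambda>v. inner (g x) v)) (at x)"
    and Lip: "\<And>x y. norm (g x - g y) \<le> L * norm (x - y)"
    and Lpos: "L > 0"
  shows "f y \<ge> f x + inner (g x) (y - x) + (norm (g y - g x))\<^sup>2 / (2 * L)"
proof -
  define u where "u = y - (1 / L) *\<^sub>R (g y - g x)"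
  have d: "f u \<le> f y + inner (g y) (u - y) + L / 2 * (norm (u - y))\<^sup>2" by (rule descent[OF grad Lip])
  have c: "f u \<ge> f x + inner (g x) (u - x)" by (rule grad_ineq[OF conv grad])
  have e1: "u - x = (y - x) + (u - y)" by simp
  have e2: "inner (g y) (u - y) - inner (g x) (u - y) + L / 2 * (norm (u - y))\<^sup>2 = - ((norm (g y - g x))\<^sup>2 / (2 * L))"
  proof -
    define v where "v = g y - g x"
    have uy: "u - y = - (1 / L) *\<^sub>R v" by (simp add: u_def v_def)
    have i1: "inner (g y) (u - y) - inner (g x) (u - y) = - (1 / L) * (norm v)\<^sup>2"
      by (simp add: uy v_def inner_diff_left power2_norm_eq_inner diff_divide_distrib)
    have i2: "(norm (u - y))\<^sup>2 = (1 / L)\<^sup>2 * (norm v)\<^sup>2"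
      using Lpos by (simp add: uy power_mult_distrib power_divide)
    have i3: "L / 2 * ((1 / L)\<^sup>2 * (norm v)\<^sup>2) = (norm v)\<^sup>2 / (2 * L)"
      using Lpos by (simp add: power2_eq_square field_simps)
    show ?thesis unfolding i2 i3 using i1 by (simp add: v_def)
  qed
  show ?thesis using d c e2 unfolding e1 inner_add_right by linarith
qed

lemma norm_sub_sq:
  fixes a b :: "'a::real_inner"
  shows "(norm (a - t *\<^sub>R b))\<^sup>2 = (norm a)\<^sup>2 - 2 * t * inner b a + t\<^sup>2 * (norm b)\<^sup>2"
  unfolding power2_norm_eq_inner
  by (simp add: inner_diff_left inner_diff_right inner_commute power2_eq_square algebra_simps)

lemma one_step:
  fixes f :: "'a::real_inner \<Rightarrow> real" and g :: "'a \<Rightarrow> 'a"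
  assumes conv: "convex_on UNIV f"
    and grad: "\<And>x. (f has_derivative (\<lambda>v. inner (g x) v)) (at x)"
    and Lpos: "L > 0"
    and Lip: "\<And>x y. norm (g x - g y) \<le> L * norm (x - y)"
    and gxs: "g xs = 0"
    and nu: "0 < \<nu>" "\<nu> < 1"
    and hpos: "0 < h" and hhu: "h \<le> hu" and hu: "hu < 4 / L"
    and beta: "0 \<le> \<beta>" "\<beta> \<le> 1"
    and eta: "0 < \<eta>" "\<eta> < 2"
    and gx: "g x \<noteq> 0"
    and rle: "alg3_r g x h \<le> \<nu>"
    and zdef: "z = x - h *\<^sub>R g x"
  shows "(norm (x - (\<eta> * alg3_alpha L \<beta> g x h z * h) *\<^sub>R (g x - \<beta> *\<^sub>R (g x - g z)) - xs))\<^sup>2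
     \<le> (norm (x - xs))\<^sup>2 - \<eta> * (2 - \<eta>) * (((1 - \<beta>) * (1 - L * hu / 4) + \<beta> * (1 - \<nu>)) / (2 + 2 * \<beta>\<^sup>2 * \<nu>\<^sup>2))
        * ((1 - \<beta>) * (1 - L * hu / 4) + \<beta> * (1 - \<nu>)) * (norm (x - z))\<^sup>2"
proof -
  define w where "w = x - z"
  define e where "e = h *\<^sub>R (g z - g x)"
  define c where "c = (1 - \<beta>) * (1 - L * hu / 4) + \<beta> * (1 - \<nu>)"
  define \<phi> where "\<phi> = (1 - \<beta>) * (1 - L * h / 4) * (norm w)\<^sup>2 + \<beta> * inner w (h *\<^sub>R g z)"
  define hd where "hd = h *\<^sub>R (g x - \<beta> *\<^sub>R (g x - g z))"
  define W where "W = (norm w)\<^sup>2"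
  have w: "w = h *\<^sub>R g x" by (simp add: w_def zdef)
  have nw: "norm w = h * norm (g x)" using hpos by (simp add: w)
  have wpos: "norm w > 0" using hpos gx by (simp add: nw)
  have hgz: "h *\<^sub>R g z = w + e" by (simp add: w e_def algebra_simps)
  have hd: "hd = w + \<beta> *\<^sub>R e" by (simp add: hd_def w e_def algebra_simps)
  have hd2: "hd = (1 - \<beta>) *\<^sub>R w + \<beta> *\<^sub>R (h *\<^sub>R g z)" by (simp add: hd hgz algebra_simps)
  have ne: "norm e \<le> \<nu> * norm w"
  proof -
    have "alg3_r g x h = h * norm (g z - g x) / norm w"
      by (simp add: alg3_r_def zdef w)
    with rle wpos have "h * norm (g z - g x) \<le> \<nu> * norm w"
      by (simp add: divide_le_eq)
    then show ?thesis using hpos by (simp add: e_def)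
  qed
  have cpos: "c > 0"
  proof -
    have "L * hu < 4" using hu Lpos by (simp add: field_simps)
    then have "1 - L * hu / 4 > 0" by simp
    then show ?thesis unfolding c_def using beta nu
      by (cases "\<beta> = 1") (auto intro!: add_pos_nonneg mult_pos_pos)
  qed
  have inner_we: "inner w e \<ge> - (\<nu> * W)"
  proof -
    have "\<bar>inner w e\<bar> \<le> norm w * norm e" by (rule Cauchy_Schwarz_ineq2)
    also have "\<dots> \<le> norm w * (\<nu> * norm w)" by (rule mult_left_mono[OF ne]) simp
    finally have "\<bar>inner w e\<bar> \<le> \<nu> * W" by (simp add: W_def power2_eq_square mult.commute mult.left_commute)
    then show ?thesis by linarith
  qed
  have wgz: "inner w (h *\<^sub>R g z) \<ge> (1 - \<nu>) * W"
    using inner_we by (simp add: hgz inner_add_right W_def power2_norm_eq_inner algebra_simps)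
  have phic: "\<phi> \<ge> c * W"
  proof -
    have "L * h \<le> L * hu" using hhu Lpos by simp
    then have "(1 - \<beta>) * (1 - L * h / 4) * W \<ge> (1 - \<beta>) * (1 - L * hu / 4) * W"
      using beta by (intro mult_right_mono mult_left_mono) (auto simp: W_def)
    moreover have "\<beta> * inner w (h *\<^sub>R g z) \<ge> \<beta> * ((1 - \<nu>) * W)"
      using wgz beta by (intro mult_left_mono) auto
    moreover have "\<phi> = (1 - \<beta>) * (1 - L * h / 4) * W + \<beta> * inner w (h *\<^sub>R g z)"
      by (simp add: \<phi>_def W_def)
    moreover have "c * W = (1 - \<beta>) * (1 - L * hu / 4) * W + \<beta> * ((1 - \<nu>) * W)"
      by (simp add: c_def algebra_simps)
    ultimately show ?thesis by linarith
  qed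
  have Wpos: "W > 0" using wpos by (simp add: W_def)
  have phipos: "\<phi> > 0" using phic mult_pos_pos[OF cpos Wpos] by linarith
  have nhd_up: "norm hd \<le> (1 + \<beta> * \<nu>) * norm w"
  proof -
    have "norm hd \<le> norm w + norm (\<beta> *\<^sub>R e)" unfolding hd by (rule norm_triangle_ineq)
    also have "norm (\<beta> *\<^sub>R e) \<le> \<beta> * (\<nu> * norm w)" using beta ne by (simp add: mult_left_mono)
    finally show ?thesis by (simp add: algebra_simps)
  qed
  have nhd_lo: "norm hd \<ge> (1 - \<beta> * \<nu>) * norm w"
  proof -
    have "norm w \<le> norm hd + norm (\<beta> *\<^sub>R e)"
      using norm_triangle_ineq4[of hd "\<beta> *\<^sub>R e"] by (simp add: hd)
    moreover have "norm (\<beta> *\<^sub>R e) \<le> \<beta> * (\<nu> * norm w)" using beta ne by (simp add: mult_left_mono)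
    ultimately show ?thesis by (simp add: algebra_simps)
  qed
  have bnu: "\<beta> * \<nu> < 1" proof -
    have "\<beta> * \<nu> \<le> 1 * \<nu>" using beta nu by (intro mult_right_mono) auto
    then show ?thesis using nu by linarith
  qed
  have Dpos: "norm hd > 0" using nhd_lo mult_pos_pos[of "1 - \<beta> * \<nu>" "norm w"] bnu wpos by linarith
  define D where "D = (norm hd)\<^sup>2"
  have Dpos': "D > 0" using Dpos by (simp add: D_def)
  have Dup: "D \<le> (2 + 2 * \<beta>\<^sup>2 * \<nu>\<^sup>2) * W"
  proof -
    have "D \<le> ((1 + \<beta> * \<nu>) * norm w)\<^sup>2" unfolding D_def
      using nhd_up by (intro power_mono) auto
    also have "\<dots> = (1 + \<beta> * \<nu>)\<^sup>2 * W" by (simp add: W_def power_mult_distrib)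
    also have "\<dots> \<le> (2 + 2 * \<beta>\<^sup>2 * \<nu>\<^sup>2) * W"
    proof (rule mult_right_mono)
      have "0 \<le> (1 - \<beta> * \<nu>)\<^sup>2" by simp
      then show "(1 + \<beta> * \<nu>)\<^sup>2 \<le> 2 + 2 * \<beta>\<^sup>2 * \<nu>\<^sup>2"
        by (simp add: power2_eq_square algebra_simps)
    qed (use Wpos in auto)
    finally show ?thesis .
  qed
  have alpha: "alg3_alpha L \<beta> g x h z = \<phi> / D"
    by (simp add: alg3_alpha_def \<phi>_def D_def hd_def w_def power_mult_distrib)
  define \<alpha> where "\<alpha> = \<phi> / D"
  have alphapos: "\<alpha> > 0" using phipos Dpos' by (simp add: \<alpha>_def)
  have aD: "\<alpha> * D = \<phi>" using Dpos' by (simp add: \<alpha>_def)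
  have amin: "\<alpha> \<ge> c / (2 + 2 * \<beta>\<^sup>2 * \<nu>\<^sup>2)"
  proof -
    have q: "2 + 2 * \<beta>\<^sup>2 * \<nu>\<^sup>2 > 0" by (simp add: add_pos_nonneg)
    have "c / (2 + 2 * \<beta>\<^sup>2 * \<nu>\<^sup>2) = c * W / ((2 + 2 * \<beta>\<^sup>2 * \<nu>\<^sup>2) * W)" using Wpos by simp
    also have "\<dots> \<le> \<phi> / D"
      using phic Dup Dpos' cpos Wpos q phipos by (intro frac_le) auto
    finally show ?thesis by (simp add: \<alpha>_def)
  qed
  have key1: "inner w (x - xs) \<ge> (1 - L * h / 4) * W"
  proof -
    have a1: "f xs \<ge> f x + inner (g x) (xs - x) + (norm (g xs - g x))\<^sup>2 / (2 * L)"
      by (rule lowb[OF conv grad Lip Lpos])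
    have a2: "f x \<ge> f xs + inner (g xs) (x - xs) + (norm (g x - g xs))\<^sup>2 / (2 * L)"
      by (rule lowb[OF conv grad Lip Lpos])
    have "inner (g x) (x - xs) \<ge> (norm (g x))\<^sup>2 / L"
      using a1 a2 gxs by (simp add: inner_diff_right)
    then have "inner w (x - xs) \<ge> h * ((norm (g x))\<^sup>2 / L)"
      using hpos mult_left_mono[of "(norm (g x))\<^sup>2 / L" "inner (g x) (x - xs)" h] by (simp add: w)
    also have "h * ((norm (g x))\<^sup>2 / L) = W / (L * h)"
      using hpos Lpos by (simp add: W_def nw power2_eq_square field_simps)
    also have "W / (L * h) \<ge> (1 - L * h / 4) * W"
    proof -
      have "1 / (L * h) \<ge> 1 - L * h / 4"
      proof -
        have "(L * h - 2)\<^sup>2 \<ge> 0" by simp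
        then have "1 \<ge> (1 - L * h / 4) * (L * h)" by (simp add: power2_eq_square algebra_simps)
        then show ?thesis using hpos Lpos by (simp add: field_simps)
      qed
      then have "(1 - L * h / 4) * W \<le> (1 / (L * h)) * W" using Wpos by (intro mult_right_mono) auto
      then show ?thesis by simp
    qed
    finally show ?thesis .
  qed
  have key2: "inner (h *\<^sub>R g z) (x - xs) \<ge> inner w (h *\<^sub>R g z)"
  proof -
    have "f xs \<ge> f z + inner (g z) (xs - z)" by (rule grad_ineq[OF conv grad])
    moreover have "f z \<ge> f xs" using grad_ineq[OF conv grad, of xs z] gxs by simp
    ultimately have "inner (g z) (z - xs) \<ge> 0" by (simp add: inner_diff_right)
    then have "h * inner (g z) (z - xs) \<ge> 0" using hpos by simp
    moreover have "inner (h *\<^sub>R g z) (x - xs) = inner w (h *\<^sub>R g z) + h * inner (g z) (z - xs)"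
    proof -
      have "x - xs = w + (z - xs)" by (simp add: w_def)
      then have "inner (h *\<^sub>R g z) (x - xs) = inner (h *\<^sub>R g z) w + inner (h *\<^sub>R g z) (z - xs)"
        by (simp only: inner_add_right)
      then show ?thesis by (simp add: inner_commute)
    qed
    ultimately show ?thesis by linarith
  qed
  have P: "inner hd (x - xs) \<ge> \<phi>"
  proof -
    have "inner hd (x - xs) = (1 - \<beta>) * inner w (x - xs) + \<beta> * inner (h *\<^sub>R g z) (x - xs)"
      by (simp add: hd2 inner_add_left)
    moreover have "(1 - \<beta>) * inner w (x - xs) \<ge> (1 - \<beta>) * ((1 - L * h / 4) * W)"
      using key1 beta by (intro mult_left_mono) auto
    moreover have "\<beta> * inner (h *\<^sub>R g z) (x - xs) \<ge> \<beta> * inner w (h *\<^sub>R g z)"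
      using key2 beta by (intro mult_left_mono) auto
    ultimately show ?thesis by (simp add: \<phi>_def W_def algebra_simps)
  qed
  have xnew: "x - (\<eta> * alg3_alpha L \<beta> g x h z * h) *\<^sub>R (g x - \<beta> *\<^sub>R (g x - g z)) - xs
      = (x - xs) - (\<eta> * \<alpha>) *\<^sub>R hd"
    by (simp add: alpha \<alpha>_def hd_def)
  have "(norm ((x - xs) - (\<eta> * \<alpha>) *\<^sub>R hd))\<^sup>2
      = (norm (x - xs))\<^sup>2 - 2 * (\<eta> * \<alpha>) * inner hd (x - xs) + (\<eta> * \<alpha>)\<^sup>2 * D"
    unfolding D_def by (rule norm_sub_sq)
  also have "\<dots> \<le> (norm (x - xs))\<^sup>2 - 2 * (\<eta> * \<alpha>) * \<phi> + (\<eta> * \<alpha>)\<^sup>2 * D"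
  proof -
    have "2 * (\<eta> * \<alpha>) * \<phi> \<le> 2 * (\<eta> * \<alpha>) * inner hd (x - xs)"
      using P eta alphapos by (intro mult_left_mono) auto
    then show ?thesis by linarith
  qed
  also have "\<dots> = (norm (x - xs))\<^sup>2 - \<eta> * (2 - \<eta>) * (\<alpha> * \<phi>)"
    using aD by (simp add: power2_eq_square algebra_simps)
  also have "\<dots> \<le> (norm (x - xs))\<^sup>2 - \<eta> * (2 - \<eta>) * (c / (2 + 2 * \<beta>\<^sup>2 * \<nu>\<^sup>2) * (c * W))"
  proof -
    have "c / (2 + 2 * \<beta>\<^sup>2 * \<nu>\<^sup>2) * (c * W) \<le> \<alpha> * \<phi>"
      using amin phic cpos Wpos alphapos by (intro mult_mono) auto
    moreover have "\<eta> * (2 - \<eta>) > 0" using eta by simp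
    ultimately have "\<eta> * (2 - \<eta>) * (c / (2 + 2 * \<beta>\<^sup>2 * \<nu>\<^sup>2) * (c * W)) \<le> \<eta> * (2 - \<eta>) * (\<alpha> * \<phi>)"
      by (intro mult_left_mono) auto
    then show ?thesis by linarith
  qed
  finally have F: "(norm ((x - xs) - (\<eta> * \<alpha>) *\<^sub>R hd))\<^sup>2
      \<le> (norm (x - xs))\<^sup>2 - \<eta> * (2 - \<eta>) * (c / (2 + 2 * \<beta>\<^sup>2 * \<nu>\<^sup>2) * (c * W))" .
  show ?thesis unfolding xnew using F by (simp add: c_def W_def w_def mult.assoc)
qed


lemma r_bound:
  fixes g :: "'a::real_normed_vector \<Rightarrow> 'a"
  assumes Lip: "\<And>x y. norm (g x - g y) \<le> L * norm (x - y)"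
    and gx: "g x \<noteq> 0" and gp: "\<gamma> > 0"
  shows "alg3_r g x \<gamma> \<le> L * \<gamma>"
proof -
  have n: "norm ((x - \<gamma> *\<^sub>R g x) - x) = \<gamma> * norm (g x)" using gp by simp
  have np: "\<gamma> * norm (g x) > 0" using gp gx by simp
  have "\<gamma> * norm (g (x - \<gamma> *\<^sub>R g x) - g x) \<le> \<gamma> * (L * (\<gamma> * norm (g x)))"
    using Lip[of "x - \<gamma> *\<^sub>R g x" x] gp n by (intro mult_left_mono) auto
  have "alg3_r g x \<gamma> = \<gamma> * norm (g (x - \<gamma> *\<^sub>R g x) - g x) / (\<gamma> * norm (g x))"
    unfolding alg3_r_def n ..
  also have "\<dots> \<le> \<gamma> * (L * (\<gamma> * norm (g x))) / (\<gamma> * norm (g x))"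
    using np \<open>\<gamma> * norm _ \<le> _\<close> by (intro divide_right_mono) auto
  also have "\<dots> = L * \<gamma>" using gx gp by simp
  finally show ?thesis .
qed

lemma bt_props:
  fixes g :: "'a::real_normed_vector \<Rightarrow> 'a"
  assumes Lip: "\<And>x y. norm (g x - g y) \<le> L * norm (x - y)"
    and Lpos: "L > 0"
    and gx: "g x \<noteq> 0" and nu: "0 < \<nu>" and theta: "0 < \<theta>" "\<theta> < 1"
    and g0: "\<gamma>0 > 0"
  shows "0 < alg3_h g \<nu> \<theta> x \<gamma>0 \<and> alg3_h g \<nu> \<theta> x \<gamma>0 \<le> \<gamma>0 \<and> alg3_r g x (alg3_h g \<nu> \<theta> x \<gamma>0) \<le> \<nu>"
proof -
  let ?b = "alg3_bt g \<theta> x \<gamma>0"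
  let ?P = "\<lambda>l. alg3_r g x (?b l) \<le> \<nu>"
  have stepb: "0 < ?b (Suc l) \<and> ?b (Suc l) \<le> \<theta> * ?b l" if "0 < ?b l" "\<not> ?P l" for l
  proof -
    have rp: "alg3_r g x (?b l) > 0" using that nu by simp
    have m: "0 < min 1 (1 / alg3_r g x (?b l))" "min 1 (1 / alg3_r g x (?b l)) \<le> 1"
      using rp by auto
    have e: "?b (Suc l) = (\<theta> * ?b l) * min 1 (1 / alg3_r g x (?b l))" by (simp add: mult_ac)
    have p: "0 < \<theta> * ?b l" using that theta by simp
    show ?thesis unfolding e using m p mult_left_le[of "min 1 (1 / alg3_r g x (?b l))" "\<theta> * ?b l"]
      by simp
  qed
  have ex: "\<exists>l. ?P l"
  proof (rule ccontr)
    assume nP: "\<not> (\<exists>l. ?P l)"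
    have bnd: "0 < ?b l \<and> ?b l \<le> \<theta> ^ l * \<gamma>0" for l
    proof (induction l)
      case 0 then show ?case using g0 by simp
    next
      case (Suc l)
      then have "0 < ?b (Suc l) \<and> ?b (Suc l) \<le> \<theta> * ?b l" using stepb nP by blast
      moreover have "\<theta> * ?b l \<le> \<theta> * (\<theta> ^ l * \<gamma>0)" using Suc theta by (intro mult_left_mono) auto
      ultimately show ?case by (simp add: mult_ac)
    qed
    obtain l where l: "\<theta> ^ l < \<nu> / (L * \<gamma>0)"
      using real_arch_pow_inv[of "\<nu> / (L * \<gamma>0)" \<theta>] nu Lpos g0 theta by auto
    have "alg3_r g x (?b l) \<le> L * ?b l" using r_bound[OF Lip gx] bnd by blast
    also have "\<dots> \<le> L * (\<theta> ^ l * \<gamma>0)" using bnd Lpos by (intro mult_left_mono) auto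
    also have "\<dots> < L * (\<nu> / (L * \<gamma>0) * \<gamma>0)" using mult_strict_right_mono[OF l g0] Lpos by (intro mult_strict_left_mono) auto
    also have "\<dots> = \<nu>" using Lpos g0 by simp
    finally have "alg3_r g x (?b l) < \<nu>" .
    then show False using nP less_imp_le by blast
  qed
  define n where "n = (LEAST l. ?P l)"
  have Pn: "?P n" unfolding n_def by (rule LeastI_ex[OF ex])
  have bd: "l \<le> n \<Longrightarrow> 0 < ?b l \<and> ?b l \<le> \<gamma>0" for l
  proof (induction l)
    case 0 then show ?case using g0 by simp
  next
    case (Suc l)
    then have nl: "\<not> ?P l" unfolding n_def using not_less_Least[of l ?P] by (simp add: n_def)
    from Suc have "0 < ?b l \<and> ?b l \<le> \<gamma>0" by simp
    with stepb[OF _ nl] have "0 < ?b (Suc l) \<and> ?b (Suc l) \<le> \<theta> * ?b l" by blast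
    moreover have "\<theta> * ?b l \<le> ?b l" using \<open>0 < ?b l \<and> ?b l \<le> \<gamma>0\<close> theta by (simp add: mult_le_cancel_right1)
    ultimately show ?case using \<open>0 < ?b l \<and> ?b l \<le> \<gamma>0\<close> by linarith
  qed
  have h: "alg3_h g \<nu> \<theta> x \<gamma>0 = ?b n" by (simp add: alg3_h_def n_def)
  show ?thesis unfolding h using bd[of n] Pn by simp
qed

theorem proposition3:
  fixes f :: "real ^ 'n \<Rightarrow> real" and g :: "real ^ 'n \<Rightarrow> real ^ 'n"
    and L \<mu> \<nu> hl hu \<beta> \<theta> \<tau> \<eta> \<gamma>00 :: real and x0 :: "real ^ 'n"
  assumes conv: "convex_on UNIV f"
    and grad: "\<And>x. (f has_derivative (\<lambda>v. inner (g x) v)) (at x)"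
    and Lpos: "L > 0"
    and Lip: "\<And>x y. norm (g x - g y) \<le> L * norm (x - y)"
    and Xne: "{x. g x = 0} \<noteq> {}"
    and mu: "0 < \<mu>" "\<mu> < \<nu>" "\<nu> < 1"
    and hbounds: "0 < hl" "hl < 1" "1 \<le> \<gamma>00" "\<gamma>00 \<le> hu" "hu < 4 / L"
    and beta: "0 \<le> \<beta>" "\<beta> \<le> 1"
    and theta: "0 < \<theta>" "\<theta> < 1"
    and tau: "\<tau> > 1"
    and eta: "0 < \<eta>" "\<eta> < 2"
    and nonstop: "\<And>k. g (alg3_x g L \<mu> \<nu> hl hu \<beta> \<theta> \<tau> \<eta> x0 \<gamma>00 k) \<noteq> 0"
  shows "(let \<alpha>min = ((1 - \<beta>) * (1 - L * hu / 4) + \<beta> * (1 - \<nu>)) / (2 + 2 * \<beta>\<^sup>2 * \<nu>\<^sup>2);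
              \<kappa>4 = \<eta> * (2 - \<eta>) * \<alpha>min * ((1 - \<beta>) * (1 - L * hu / 4) + \<beta> * (1 - \<nu>))
          in \<kappa>4 > 0 \<and>
             (\<forall>xs \<in> {x. g x = 0}. \<forall>k.
                (norm (alg3_x g L \<mu> \<nu> hl hu \<beta> \<theta> \<tau> \<eta> x0 \<gamma>00 (Suc k) - xs))\<^sup>2
                \<le> (norm (alg3_x g L \<mu> \<nu> hl hu \<beta> \<theta> \<tau> \<eta> x0 \<gamma>00 k - xs))\<^sup>2
                  - \<kappa>4 * (norm (alg3_x g L \<mu> \<nu> hl hu \<beta> \<theta> \<tau> \<eta> x0 \<gamma>00 k
                                 - alg3_z g L \<mu> \<nu> hl hu \<beta> \<theta> \<tau> \<eta> x0 \<gamma>00 k))\<^sup>2))"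
proof -
  define c where "c = (1 - \<beta>) * (1 - L * hu / 4) + \<beta> * (1 - \<nu>)"
  have cpos: "c > 0"
  proof -
    have "L * hu < 4" using hbounds Lpos by (simp add: field_simps)
    then have "1 - L * hu / 4 > 0" by simp
    then show ?thesis unfolding c_def using beta mu
      by (cases "\<beta> = 1") (auto intro!: add_pos_nonneg mult_pos_pos)
  qed
  have q: "2 + 2 * \<beta>\<^sup>2 * \<nu>\<^sup>2 > 0" by (simp add: add_pos_nonneg)
  have kpos: "\<eta> * (2 - \<eta>) * (c / (2 + 2 * \<beta>\<^sup>2 * \<nu>\<^sup>2)) * c > 0"
    using eta cpos q by simp
  let ?S = "alg3_state g L \<mu> \<nu> hl hu \<beta> \<theta> \<tau> \<eta> x0 \<gamma>00"
  have hlhu: "hl \<le> hu" using hbounds by linarith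
  have inv: "0 < snd (?S k) \<and> snd (?S k) \<le> hu" for k
  proof (cases k)
    case 0 then show ?thesis using hbounds by simp
  next
    case (Suc j)
    obtain x \<gamma>0 where s: "?S j = (x, \<gamma>0)" by (cases "?S j") auto
    show ?thesis unfolding Suc using hbounds hlhu
      by (simp add: s Let_def proj_interval_def less_max_iff_disj)
  qed
  have main: "(norm (alg3_x g L \<mu> \<nu> hl hu \<beta> \<theta> \<tau> \<eta> x0 \<gamma>00 (Suc k) - xs))\<^sup>2
                \<le> (norm (alg3_x g L \<mu> \<nu> hl hu \<beta> \<theta> \<tau> \<eta> x0 \<gamma>00 k - xs))\<^sup>2
                  - \<eta> * (2 - \<eta>) * (c / (2 + 2 * \<beta>\<^sup>2 * \<nu>\<^sup>2)) * c
                   * (norm (alg3_x g L \<mu> \<nu> hl hu \<beta> \<theta> \<tau> \<eta> x0 \<gamma>00 k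
                                 - alg3_z g L \<mu> \<nu> hl hu \<beta> \<theta> \<tau> \<eta> x0 \<gamma>00 k))\<^sup>2"
    if xs: "g xs = 0" for xs k
  proof -
    obtain x \<gamma>0 where s: "?S k = (x, \<gamma>0)" by (cases "?S k") auto
    have g0: "0 < \<gamma>0" "\<gamma>0 \<le> hu" using inv[of k] s by auto
    have xk: "alg3_x g L \<mu> \<nu> hl hu \<beta> \<theta> \<tau> \<eta> x0 \<gamma>00 k = x" by (simp add: alg3_x_def s)
    have gx: "g x \<noteq> 0" using nonstop[of k] xk by simp
    define h where "h = alg3_h g \<nu> \<theta> x \<gamma>0"
    define z where "z = x - h *\<^sub>R g x"
    have zk: "alg3_z g L \<mu> \<nu> hl hu \<beta> \<theta> \<tau> \<eta> x0 \<gamma>00 k = z"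
      by (simp add: alg3_z_def s z_def h_def)
    have xk1: "alg3_x g L \<mu> \<nu> hl hu \<beta> \<theta> \<tau> \<eta> x0 \<gamma>00 (Suc k)
        = x - (\<eta> * alg3_alpha L \<beta> g x h z * h) *\<^sub>R (g x - \<beta> *\<^sub>R (g x - g z))"
      by (simp add: alg3_x_def s Let_def z_def h_def)
    have hp: "0 < h" "h \<le> \<gamma>0" "alg3_r g x h \<le> \<nu>"
      using bt_props[OF Lip Lpos gx _ theta g0(1), of \<nu>] mu unfolding h_def by auto
    show ?thesis unfolding xk zk xk1
      using one_step[OF conv grad Lpos Lip xs _ mu(3) hp(1) _ _ beta eta gx hp(3) z_def, of hu] mu hbounds hp g0
      by (simp add: c_def mult.assoc)
  qed
  show ?thesis unfolding Let_def c_def[symmetric]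
    using kpos main by auto
qed

end
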